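(* Fix real weights $w_A,w_B\ge 0$, rate targets $r_A,r_B\ge 0$, power budgets $P_A,P_B,P_R>0$, and dual variables $\lambda_A^{b_1},\lambda_B^{b_1},\lambda_A^{c_1},\lambda_B^{c_1},\lambda_{AB}^c,\mu_A,\mu_B\ge 0$ and $\alpha_A,\alpha_B,\alpha_R>0$ such that $w_k+\mu_k-\lambda_k^{b_1}\ge 0$ and $\xi_k:=w_k+\mu_k-\lambda_k^{c_1}-\lambda_{AB}^c\ge 0$ for $k\in\{A,B\}$. Then the maximum defining the dual function $g$ (see context) is attained at some feasible $(\boldsymbol\rho^*,\boldsymbol s^* )$ for which every entry of $\boldsymbol\rho^*$ lies in $\{0,1\}$.
   Context: Setting: users $A,B$ and relay $R$, subcarriers $n\in\{1,\dots,N\}$, nonnegative channel gains $|h_{j,j',n}|^2$ from node $j$ to node $j'$ on subcarrier $n$ ($j\neq j'\in\{A,B,R\}$). For $k\in\{A,B\}$, $k'$ denotes the other user. Per subcarrier $n$, the assignment vector is $\boldsymbol\rho_n=(\rho^a_{A,n},\rho^a_{B,n},\rho^b_{A,n,1},\rho^b_{B,n,1},\rho^b_{A,n,2},\rho^b_{B,n,2},\rho^c_{n,1},\rho^c_{n,2})\in[0,1]^8$ with sum of entries $\le 1$. Power variables (all $\ge 0$): $s^a_{k,n}$ (user $k$ direct), $s^b_{k,R,n}$ (user $k$ to relay, one-way), $s^b_{R,k,n}$ (relay forwarding user $k$'s message to $k'$, one-way), $s^c_{k,R,n}$ (user $k$ to relay, two-way), $s^c_{R,n}$ (relay broadcast,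 two-way). A pair $(\boldsymbol\rho,\boldsymbol s)$ satisfying these constraints is called feasible. Define $F(\rho,x)=\rho\log_2(1+x/\rho)$ for $\rho>0$ and $F(0,x)=0$. Rates: $D_{k,n}=F(\rho^a_{k,n},s^a_{k,n}|h_{k,k',n}|^2)$; $B^1_{k,n}=F(\rho^b_{k,n,1},s^b_{k,R,n}|h_{k,R,n}|^2)$; $B^2_{k,n}=F(\rho^b_{k,n,2},s^b_{R,k,n}|h_{R,k',n}|^2)$; $C^1_{k,n}=F(\rho^c_{n,1},s^c_{k,R,n}|h_{k,R,n}|^2)$; $C^{12}_n=F(\rho^c_{n,1},s^c_{A,R,n}|h_{A,R,n}|^2+s^c_{B,R,n}|h_{B,R,n}|^2)$; $C^2_{k,n}=F(\rho^c_{n,2},s^c_{R,n}|h_{R,k',n}|^2)$. With $\xi_k=w_k+\mu_k-\lambda_k^{c_1}-\lambda_{AB}^c$, the dual function is $g=\max_{(\boldsymbol\rho,\boldsymbol s)\text{ feasible}}\Big\{\sum_{n=1}^N\sum_{k\in\{A,B\}}\big[(w_k+\mu_k)D_{k,n}+\lambda_k^{b_1}B^1_{k,n}+(w_k+\mu_k-\lambda_k^{b_1})B^2_{k,n}+\lambda_k^{c_1}C^1_{k,n}+\xi_kC^2_{k,n}\big]+\lambda_{AB}^c\sum_{n=1}^N C^{12}_n+\sum_{k\in\{A,B\}}\alpha_k\big(P_k-\sum_{n=1}^N(s^a_{k,n}+s^b_{k,R,n}+s^c_{k,R,n})\big)+\alpha_R\big(P_R-\sum_{n=1}^N(\sum_{k\in\{A,B\}}s^b_{R,k,n}+s^c_{R,n})\big)-\sum_{k\in\{A,B\}}\mu_kr_k\Big\}$.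 *)

theory Defs
  imports Complex_Main
begin

datatype user = A | B

fun other :: "user \<Rightarrow> user" where
  "other A = B" | "other B = A"

datatype node = U user | R

text \<open>Indices of the 8 entries of the assignment vector rho_n:
  Ra k = rho^a_{k,n}, Rb1 k = rho^b_{k,n,1}, Rb2 k = rho^b_{k,n,2},
  Rc1 = rho^c_{n,1}, Rc2 = rho^c_{n,2}.\<close>
datatype ridx = Ra user | Rb1 user | Rb2 user | Rc1 | Rc2

text \<open>Power variables: Sa k = s^a_{k,n}, SbUR k = s^b_{k,R,n}, SbRU k = s^b_{R,k,n},
  ScUR k = s^c_{k,R,n}, ScR = s^c_{R,n}.\<close>
datatype sidx = Sa user | SbUR user | SbRU user | ScUR user | ScR

definition F :: "real \<Rightarrow> real \<Rightarrow> real" where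
  "F \<rho> x = (if \<rho> = 0 then 0 else \<rho> * log 2 (1 + x / \<rho>))"

definition rho_sum :: "(ridx \<Rightarrow> real) \<Rightarrow> real" where
  "rho_sum r = r (Ra A) + r (Ra B) + r (Rb1 A) + r (Rb1 B) + r (Rb2 A) + r (Rb2 B)
              + r Rc1 + r Rc2"

definition feasible :: "nat \<Rightarrow> (nat \<Rightarrow> ridx \<Rightarrow> real) \<Rightarrow> (nat \<Rightarrow> sidx \<Rightarrow> real) \<Rightarrow> bool" where
  "feasible N \<rho> s \<longleftrightarrow> (\<forall>n\<in>{1..N}.
      (\<forall>i. 0 \<le> \<rho> n i \<and> \<rho> n i \<le> 1) \<and> rho_sum (\<rho> n) \<le> 1 \<and> (\<forall>p. 0 \<le> s n p))"

text \<open>h j j' n stands for |h_{j,j',n}|^2.\<close>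
definition Drate where
  "Drate h \<rho> s k n = F (\<rho> n (Ra k)) (s n (Sa k) * h (U k) (U (other k)) n)"
definition B1rate where
  "B1rate h \<rho> s k n = F (\<rho> n (Rb1 k)) (s n (SbUR k) * h (U k) R n)"
definition B2rate where
  "B2rate h \<rho> s k n = F (\<rho> n (Rb2 k)) (s n (SbRU k) * h R (U (other k)) n)"
definition C1rate where
  "C1rate h \<rho> s k n = F (\<rho> n Rc1) (s n (ScUR k) * h (U k) R n)"
definition C12rate where
  "C12rate h \<rho> s n = F (\<rho> n Rc1) (s n (ScUR A) * h (U A) R n + s n (ScUR B) * h (U B) R n)"
definition C2rate where
  "C2rate h \<rho> s k n = F (\<rho> n Rc2) (s n ScR * h R (U (other k)) n)"

text \<open>The objective inside the max defining the dual function g.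
  lb1 = lambda^{b_1}, lc1 = lambda^{c_1}, lAB = lambda^c_{AB}.\<close>
definition dual_obj ::
  "nat \<Rightarrow> (node \<Rightarrow> node \<Rightarrow> nat \<Rightarrow> real) \<Rightarrow>
   (user \<Rightarrow> real) \<Rightarrow> (user \<Rightarrow> real) \<Rightarrow> (user \<Rightarrow> real) \<Rightarrow> real \<Rightarrow>
   (user \<Rightarrow> real) \<Rightarrow> (user \<Rightarrow> real) \<Rightarrow> real \<Rightarrow>
   (user \<Rightarrow> real) \<Rightarrow> (user \<Rightarrow> real) \<Rightarrow> real \<Rightarrow>
   (nat \<Rightarrow> ridx \<Rightarrow> real) \<Rightarrow> (nat \<Rightarrow> sidx \<Rightarrow> real) \<Rightarrow> real" where
  "dual_obj N h w r P PR lb1 lc1 lAB \<mu> \<alpha> \<alpha>R \<rho> s =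
     (\<Sum>n=1..N. \<Sum>k\<in>{A,B}.
        (w k + \<mu> k) * Drate h \<rho> s k n + lb1 k * B1rate h \<rho> s k n
        + (w k + \<mu> k - lb1 k) * B2rate h \<rho> s k n + lc1 k * C1rate h \<rho> s k n
        + (w k + \<mu> k - lc1 k - lAB) * C2rate h \<rho> s k n)
     + lAB * (\<Sum>n=1..N. C12rate h \<rho> s n)
     + (\<Sum>k\<in>{A,B}. \<alpha> k * (P k - (\<Sum>n=1..N. s n (Sa k) + s n (SbUR k) + s n (ScUR k))))
     + \<alpha>R * (PR - (\<Sum>n=1..N. (\<Sum>k\<in>{A,B}. s n (SbRU k)) + s n ScR))
     - (\<Sum>k\<in>{A,B}. \<mu> k * r k)"

end

theory Submission imports Defs "HOL-Analysis.Analysis" begin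


definition Psi :: "real \<Rightarrow> real \<Rightarrow> real \<Rightarrow> real \<Rightarrow> real \<Rightarrow> real \<Rightarrow> real \<Rightarrow> real \<Rightarrow> real \<Rightarrow> real \<Rightarrow> real \<Rightarrow> real \<Rightarrow> real" where
 "Psi c1 c2 c3 a1 a2 a3 a4 b1 b2 \<rho> x1 x2 = c1 * F \<rho> (x1*a1) + c2 * F \<rho> (x2*a2) + c3 * F \<rho> (x1*a3 + x2*a4) - b1*x1 - b2*x2"

lemma F_zero[simp]: "F \<rho> 0 = 0" by (simp add: F_def)

lemma Psi_zero[simp]: "Psi c1 c2 c3 a1 a2 a3 a4 b1 b2 \<rho> 0 0 = 0" by (simp add: Psi_def)

lemma Psi_one: "Psi c1 c2 c3 a1 a2 a3 a4 b1 b2 1 x1 x2 =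
  c1 * log 2 (1 + x1*a1) + c2 * log 2 (1 + x2*a2) + c3 * log 2 (1 + (x1*a3 + x2*a4)) - b1*x1 - b2*x2"
  by (simp add: Psi_def F_def)

lemma Psi_scale: assumes "0 < \<rho>"
  shows "Psi c1 c2 c3 a1 a2 a3 a4 b1 b2 \<rho> x1 x2 = \<rho> * Psi c1 c2 c3 a1 a2 a3 a4 b1 b2 1 (x1/\<rho>) (x2/\<rho>)"
  using assms by (simp add: Psi_def F_def algebra_simps add_divide_distrib)

lemma log_bound: assumes "0 \<le> u" "1 \<le> L" shows "log 2 (1+u) \<le> (ln L + u/L)/ln 2"
proof -
  have "ln ((1+u)/L) \<le> (1+u)/L - 1" using assms by (intro ln_le_minus_one) auto
  then have "ln (1+u) - ln L \<le> (1+u)/L - 1" using assms by (simp add: ln_div)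
  moreover have "1/L \<le> 1" using assms by simp
  ultimately have "ln (1+u) \<le> ln L + u/L" by (simp add: add_divide_distrib)
  then show ?thesis unfolding log_def by (simp add: divide_right_mono)
qed

lemma Psi_bound:
  assumes c: "0 \<le> c1" "0 \<le> c2" "0 \<le> c3" and a: "0 \<le> a1" "0 \<le> a2" "0 \<le> a3" "0 \<le> a4"
    and b: "0 < b1" "0 < b2"
  shows "\<exists>D. \<forall>y1 y2. 0 \<le> y1 \<longrightarrow> 0 \<le> y2 \<longrightarrow>
     Psi c1 c2 c3 a1 a2 a3 a4 b1 b2 1 y1 y2 \<le> D - b1*y1/2 - b2*y2/2"
proof -
  define q1 where "q1 = c1*a1 + c3*a3"
  define q2 where "q2 = c2*a2 + c3*a4"
  define L where "L = max 1 (max (2*q1/(b1*ln 2)) (2*q2/(b2*ln 2)))"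
  have L1: "1 \<le> L" unfolding L_def by simp
  have ln2: "0 < ln (2::real)" by simp
  have hq1: "q1/(L*ln 2) \<le> b1/2"
  proof -
    have "2*q1/(b1*ln 2) \<le> L" unfolding L_def by simp
    then have "2*q1 \<le> L*(b1*ln 2)" using b ln2 by (simp add: divide_le_eq mult.commute)
    then show ?thesis using L1 ln2 by (simp add: divide_le_eq mult_ac)
  qed
  have hq2: "q2/(L*ln 2) \<le> b2/2"
  proof -
    have "2*q2/(b2*ln 2) \<le> L" unfolding L_def by simp
    then have "2*q2 \<le> L*(b2*ln 2)" using b ln2 by (simp add: divide_le_eq mult.commute)
    then show ?thesis using L1 ln2 by (simp add: divide_le_eq mult_ac)
  qed
  show ?thesis
  proof (intro exI allI impI)
    fix y1 y2 :: real assume y: "0 \<le> y1" "0 \<le> y2"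
    have t1: "c1 * log 2 (1 + y1*a1) \<le> c1 * ((ln L + y1*a1/L)/ln 2)"
      using y a c L1 by (intro mult_left_mono log_bound) auto
    have t2: "c2 * log 2 (1 + y2*a2) \<le> c2 * ((ln L + y2*a2/L)/ln 2)"
      using y a c L1 by (intro mult_left_mono log_bound) auto
    have t3: "c3 * log 2 (1 + (y1*a3 + y2*a4)) \<le> c3 * ((ln L + (y1*a3 + y2*a4)/L)/ln 2)"
      using y a c L1 by (intro mult_left_mono log_bound) auto
    have eq: "c1 * ((ln L + y1*a1/L)/ln 2) + c2 * ((ln L + y2*a2/L)/ln 2) + c3 * ((ln L + (y1*a3 + y2*a4)/L)/ln 2)
       = (c1+c2+c3)*ln L/ln 2 + y1 * (q1/(L*ln 2)) + y2 * (q2/(L*ln 2))"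
      unfolding q1_def q2_def using L1 ln2 by (simp add: field_simps)
    have m1: "y1 * (q1/(L*ln 2)) \<le> y1 * (b1/2)" using hq1 y by (intro mult_left_mono) auto
    have m2: "y2 * (q2/(L*ln 2)) \<le> y2 * (b2/2)" using hq2 y by (intro mult_left_mono) auto
    have e1: "y1 * (b1/2) = b1*y1/2" "y2 * (b2/2) = b2*y2/2" by simp_all
    show "Psi c1 c2 c3 a1 a2 a3 a4 b1 b2 1 y1 y2 \<le> (c1+c2+c3)*ln L/ln 2 - b1*y1/2 - b2*y2/2"
      unfolding Psi_one using t1 t2 t3 eq m1 m2 e1 by linarith
  qed
qed


lemma Psi_argmax:
  assumes c: "0 \<le> c1" "0 \<le> c2" "0 \<le> c3" and a: "0 \<le> a1" "0 \<le> a2" "0 \<le> a3" "0 \<le> a4"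
    and b: "0 < b1" "0 < b2"
  shows "\<exists>z1 z2. 0 \<le> z1 \<and> 0 \<le> z2 \<and> (\<forall>y1 y2. 0 \<le> y1 \<longrightarrow> 0 \<le> y2 \<longrightarrow>
     Psi c1 c2 c3 a1 a2 a3 a4 b1 b2 1 y1 y2 \<le> Psi c1 c2 c3 a1 a2 a3 a4 b1 b2 1 z1 z2)"
proof -
  let ?P = "Psi c1 c2 c3 a1 a2 a3 a4 b1 b2 1"
  let ?f = "\<lambda>y::real\<times>real. ?P (fst y) (snd y)"
  obtain D where D: "\<And>y1 y2. 0 \<le> y1 \<Longrightarrow> 0 \<le> y2 \<Longrightarrow> ?P y1 y2 \<le> D - b1*y1/2 - b2*y2/2"
    using Psi_bound[OF assms] by blast
  have D0: "0 \<le> D" using D[of 0 0] by simp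
  define M where "M = 2*D/b1 + 2*D/b2"
  have M0: "0 \<le> M" unfolding M_def using D0 b by simp
  let ?K = "{0..M} \<times> {0..M}"
  have cK: "compact ?K" by (intro compact_Times compact_Icc)
  have nK: "?K \<noteq> {}" using M0 by auto
  have cont: "continuous_on ?K ?f" unfolding Psi_one log_def
    apply (intro continuous_intros) using a by (auto, (smt (verit) mult_nonneg_nonneg)+)
  obtain z where zK: "z \<in> ?K" and zmax: "\<And>y. y \<in> ?K \<Longrightarrow> ?f y \<le> ?f z"
    using continuous_attains_sup[OF cK nK cont] by blast
  have glob: "?P y1 y2 \<le> ?f z" if y: "0 \<le> y1" "0 \<le> y2" for y1 y2
  proof (cases "(y1, y2) \<in> ?K")
    case True then show ?thesis using zmax[of "(y1,y2)"] by simp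
  next
    case False
    then have "y1 > M \<or> y2 > M" using y by auto
    moreover have "2*D/b1 \<le> M" "2*D/b2 \<le> M" unfolding M_def using D0 b by auto
    ultimately have "D < b1*y1/2 + b2*y2/2"
    proof (elim disjE)
      assume "y1 > M" "2*D/b1 \<le> M"
      then have "2*D/b1 < y1" by linarith
      then have "2*D < b1*y1" using b by (simp add: divide_less_eq mult.commute)
      moreover have "0 \<le> b2*y2" using b y by simp
      ultimately show ?thesis by linarith
    next
      assume "y2 > M" "2*D/b2 \<le> M"
      then have "2*D/b2 < y2" by linarith
      then have "2*D < b2*y2" using b by (simp add: divide_less_eq mult.commute)
      moreover have "0 \<le> b1*y1" using b y by simp
      ultimately show ?thesis by linarith
    qed
    then have "?P y1 y2 \<le> 0" using D[OF y] by linarith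
    also have "0 = ?f (0,0)" by simp
    also have "\<dots> \<le> ?f z" using zmax[of "(0,0)"] M0 by simp
    finally show ?thesis .
  qed
  show ?thesis using zK glob by (intro exI[of _ "fst z"] exI[of _ "snd z"]) auto
qed

lemma Psi_max:
  assumes c: "0 \<le> c1" "0 \<le> c2" "0 \<le> c3" and a: "0 \<le> a1" "0 \<le> a2" "0 \<le> a3" "0 \<le> a4"
    and b: "0 < b1" "0 < b2"
  shows "\<exists>y1 y2. 0 \<le> y1 \<and> 0 \<le> y2 \<and> (c2 = 0 \<and> a4 = 0 \<longrightarrow> y2 = 0) \<and>
    (\<forall>\<rho> x1 x2. 0 \<le> \<rho> \<longrightarrow> 0 \<le> x1 \<longrightarrow> 0 \<le> x2 \<longrightarrow>
       Psi c1 c2 c3 a1 a2 a3 a4 b1 b2 \<rho> x1 x2 \<le> \<rho> * Psi c1 c2 c3 a1 a2 a3 a4 b1 b2 1 y1 y2)"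
proof -
  let ?P = "Psi c1 c2 c3 a1 a2 a3 a4 b1 b2"
  obtain z1 z2 where z: "0 \<le> z1" "0 \<le> z2" and zmax: "\<And>y1 y2. 0 \<le> y1 \<Longrightarrow> 0 \<le> y2 \<Longrightarrow> ?P 1 y1 y2 \<le> ?P 1 z1 z2"
    using Psi_argmax[OF assms] by blast
  obtain y1 y2 where y: "0 \<le> y1" "0 \<le> y2" "c2 = 0 \<and> a4 = 0 \<longrightarrow> y2 = 0"
    and ymax: "\<And>x1 x2. 0 \<le> x1 \<Longrightarrow> 0 \<le> x2 \<Longrightarrow> ?P 1 x1 x2 \<le> ?P 1 y1 y2"
  proof (cases "c2 = 0 \<and> a4 = 0")
    case True
    have "?P 1 z1 z2 \<le> ?P 1 z1 0" using True b z by (simp add: Psi_def)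
    then show ?thesis using that[of z1 0] z zmax True by force
  next
    case False then show ?thesis using that[of z1 z2] z zmax by blast
  qed
  show ?thesis
  proof (intro exI conjI allI impI)
    fix \<rho> x1 x2 :: real assume h: "0 \<le> \<rho>" "0 \<le> x1" "0 \<le> x2"
    show "?P \<rho> x1 x2 \<le> \<rho> * ?P 1 y1 y2"
    proof (cases "\<rho> = 0")
      case True
      have "0 \<le> b1*x1" "0 \<le> b2*x2" using h b by simp_all
      then show ?thesis using True by (simp add: Psi_def F_def)
    next
      case False
      then have rp: "0 < \<rho>" using h by simp
      have "?P \<rho> x1 x2 = \<rho> * ?P 1 (x1/\<rho>) (x2/\<rho>)" by (rule Psi_scale[OF rp])
      also have "\<dots> \<le> \<rho> * ?P 1 y1 y2" using rp h by (intro mult_left_mono ymax) auto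
      finally show ?thesis .
    qed
  qed (use y in auto)
qed



definition J :: "ridx set" where "J = {Ra A, Ra B, Rb1 A, Rb1 B, Rb2 A, Rb2 B, Rc1, Rc2}"

lemma finJ: "finite J" by (simp add: J_def)

fun x1i :: "ridx \<Rightarrow> sidx" where
  "x1i (Ra k) = Sa k" | "x1i (Rb1 k) = SbUR k" | "x1i (Rb2 k) = SbRU k" | "x1i Rc1 = ScUR A" | "x1i Rc2 = ScR"

lemma x1i_inj: "x1i i = x1i j \<Longrightarrow> i = j" by (cases i; cases j) auto
lemma x1i_ne: "x1i j \<noteq> ScUR B" by (cases j) auto

definition x2v :: "ridx \<Rightarrow> (sidx \<Rightarrow> real) \<Rightarrow> real" where
  "x2v j v = (if j = Rc1 then v (ScUR B) else 0)"

fun PsiJ :: "(node \<Rightarrow> node \<Rightarrow> nat \<Rightarrow> real) \<Rightarrow> (user \<Rightarrow> real) \<Rightarrow> (user \<Rightarrow> real) \<Rightarrow> (user \<Rightarrow> real)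
   \<Rightarrow> real \<Rightarrow> (user \<Rightarrow> real) \<Rightarrow> (user \<Rightarrow> real) \<Rightarrow> real \<Rightarrow> nat \<Rightarrow> ridx \<Rightarrow> real \<Rightarrow> real \<Rightarrow> real \<Rightarrow> real" where
  "PsiJ h w lb1 lc1 lAB \<mu> \<alpha> \<alpha>R n (Ra k) = Psi (w k + \<mu> k) 0 0 (h (U k) (U (other k)) n) 0 0 0 (\<alpha> k) 1"
| "PsiJ h w lb1 lc1 lAB \<mu> \<alpha> \<alpha>R n (Rb1 k) = Psi (lb1 k) 0 0 (h (U k) R n) 0 0 0 (\<alpha> k) 1"
| "PsiJ h w lb1 lc1 lAB \<mu> \<alpha> \<alpha>R n (Rb2 k) = Psi (w k + \<mu> k - lb1 k) 0 0 (h R (U (other k)) n) 0 0 0 \<alpha>R 1"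
| "PsiJ h w lb1 lc1 lAB \<mu> \<alpha> \<alpha>R n Rc1 = Psi (lc1 A) (lc1 B) lAB (h (U A) R n) (h (U B) R n) (h (U A) R n) (h (U B) R n) (\<alpha> A) (\<alpha> B)"
| "PsiJ h w lb1 lc1 lAB \<mu> \<alpha> \<alpha>R n Rc2 = Psi (w A + \<mu> A - lc1 A - lAB) 0 (w B + \<mu> B - lc1 B - lAB) (h R (U B) n) 0 (h R (U A) n) 0 \<alpha>R 1"

lemma PsiJ_zero[simp]: "PsiJ h w lb1 lc1 lAB \<mu> \<alpha> \<alpha>R n j \<rho> 0 0 = 0"
  by (cases j) auto

definition Tn where
  "Tn h w lb1 lc1 lAB \<mu> \<alpha> \<alpha>R n rr v = (\<Sum>j\<in>J. PsiJ h w lb1 lc1 lAB \<mu> \<alpha> \<alpha>R n j (rr j) (v (x1i j)) (x2v j v))"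

lemma decomp:
  "dual_obj N h w r P PR lb1 lc1 lAB \<mu> \<alpha> \<alpha>R \<rho> s =
    (\<Sum>n=1..N. Tn h w lb1 lc1 lAB \<mu> \<alpha> \<alpha>R n (\<rho> n) (s n))
    + ((\<Sum>k\<in>{A,B}. \<alpha> k * P k) + \<alpha>R * PR - (\<Sum>k\<in>{A,B}. \<mu> k * r k))"
proof (induction N)
  case 0 then show ?case by (simp add: dual_obj_def algebra_simps)
next
  case (Suc N)
  show ?case
    using Suc.IH
    unfolding dual_obj_def Tn_def
    by (simp add: J_def x2v_def Psi_def Drate_def B1rate_def B2rate_def C1rate_def C12rate_def C2rate_def algebra_simps)
qed


lemma PsiJ_max:
  assumes h_nonneg: "\<And>j j' n. 0 \<le> h j j' n"
    and w_nonneg: "\<And>k. 0 \<le> w k"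
    and lb1_nonneg: "\<And>k. 0 \<le> lb1 k"
    and lc1_nonneg: "\<And>k. 0 \<le> lc1 k"
    and lAB_nonneg: "0 \<le> lAB"
    and mu_nonneg: "\<And>k. 0 \<le> \<mu> k"
    and alpha_pos: "\<And>k. 0 < \<alpha> k" and alphaR_pos: "0 < \<alpha>R"
    and b2_nonneg: "\<And>k. 0 \<le> w k + \<mu> k - lb1 k"
    and xi_nonneg: "\<And>k. 0 \<le> w k + \<mu> k - lc1 k - lAB"
  shows "\<exists>y1 y2. 0 \<le> y1 \<and> 0 \<le> y2 \<and> (j \<noteq> Rc1 \<longrightarrow> y2 = 0) \<and>
    (\<forall>\<rho> x1 x2. 0 \<le> \<rho> \<longrightarrow> 0 \<le> x1 \<longrightarrow> 0 \<le> x2 \<longrightarrow>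
       PsiJ h w lb1 lc1 lAB \<mu> \<alpha> \<alpha>R n j \<rho> x1 x2 \<le> \<rho> * PsiJ h w lb1 lc1 lAB \<mu> \<alpha> \<alpha>R n j 1 y1 y2)"
proof (cases j)
  case (Ra k)
  have "0 \<le> w k + \<mu> k" using w_nonneg mu_nonneg by (simp add: add_nonneg_nonneg)
  then show ?thesis using Ra Psi_max[of "w k + \<mu> k" 0 0 "h (U k) (U (other k)) n" 0 0 0 "\<alpha> k" 1]
    h_nonneg alpha_pos by simp
next
  case (Rb1 k)
  then show ?thesis using Psi_max[of "lb1 k" 0 0 "h (U k) R n" 0 0 0 "\<alpha> k" 1]
    h_nonneg alpha_pos lb1_nonneg by simp
next
  case (Rb2 k)
  then show ?thesis using Psi_max[of "w k + \<mu> k - lb1 k" 0 0 "h R (U (other k)) n" 0 0 0 \<alpha>R 1]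
    h_nonneg alphaR_pos b2_nonneg by simp
next
  case Rc1
  let ?Q = "Psi (lc1 A) (lc1 B) lAB (h (U A) R n) (h (U B) R n) (h (U A) R n) (h (U B) R n) (\<alpha> A) (\<alpha> B)"
  have ex: "\<exists>y1 y2. 0 \<le> y1 \<and> 0 \<le> y2 \<and> (lc1 B = 0 \<and> h (U B) R n = 0 \<longrightarrow> y2 = 0) \<and>
    (\<forall>\<rho> x1 x2. 0 \<le> \<rho> \<longrightarrow> 0 \<le> x1 \<longrightarrow> 0 \<le> x2 \<longrightarrow> ?Q \<rho> x1 x2 \<le> \<rho> * ?Q 1 y1 y2)"
    by (rule Psi_max) (simp_all add: h_nonneg alpha_pos lc1_nonneg lAB_nonneg)
  then obtain y1 y2 where y: "0 \<le> y1 \<and> 0 \<le> y2 \<and> (lc1 B = 0 \<and> h (U B) R n = 0 \<longrightarrow> y2 = 0) \<and>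
    (\<forall>\<rho> x1 x2. 0 \<le> \<rho> \<longrightarrow> 0 \<le> x1 \<longrightarrow> 0 \<le> x2 \<longrightarrow> ?Q \<rho> x1 x2 \<le> \<rho> * ?Q 1 y1 y2)"
    by (elim exE)
  show ?thesis unfolding Rc1 PsiJ.simps
    apply (rule exI[of _ y1], rule exI[of _ y2])
    using y by simp
next
  case Rc2
  then show ?thesis using Psi_max[of "w A + \<mu> A - lc1 A - lAB" 0 "w B + \<mu> B - lc1 B - lAB" "h R (U B) n" 0 "h R (U A) n" 0 \<alpha>R 1]
    h_nonneg alphaR_pos xi_nonneg by simp
qed


lemma ex_pair: "\<exists>x y. P x y \<Longrightarrow> \<exists>p. P (fst p) (snd p)" by auto

theorem proposition2:
  fixes N :: nat
    and h :: "node \<Rightarrow> node \<Rightarrow> nat \<Rightarrow> real"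
    and w r P lb1 lc1 \<mu> \<alpha> :: "user \<Rightarrow> real"
    and PR lAB \<alpha>R :: real
  assumes h_nonneg: "\<And>j j' n. 0 \<le> h j j' n"
    and w_nonneg: "\<And>k. 0 \<le> w k"
    and r_nonneg: "\<And>k. 0 \<le> r k"
    and P_pos: "\<And>k. 0 < P k" and PR_pos: "0 < PR"
    and lb1_nonneg: "\<And>k. 0 \<le> lb1 k"
    and lc1_nonneg: "\<And>k. 0 \<le> lc1 k"
    and lAB_nonneg: "0 \<le> lAB"
    and mu_nonneg: "\<And>k. 0 \<le> \<mu> k"
    and alpha_pos: "\<And>k. 0 < \<alpha> k" and alphaR_pos: "0 < \<alpha>R"
    and b2_nonneg: "\<And>k. 0 \<le> w k + \<mu> k - lb1 k"
    and xi_nonneg: "\<And>k. 0 \<le> w k + \<mu> k - lc1 k - lAB"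
  shows "\<exists>\<rho>s ss. feasible N \<rho>s ss
           \<and> (\<forall>n\<in>{1..N}. \<forall>i. \<rho>s n i \<in> {0, 1})
           \<and> (\<forall>\<rho> s. feasible N \<rho> s \<longrightarrow>
                 dual_obj N h w r P PR lb1 lc1 lAB \<mu> \<alpha> \<alpha>R \<rho> s
                 \<le> dual_obj N h w r P PR lb1 lc1 lAB \<mu> \<alpha> \<alpha>R \<rho>s ss)"
proof -
  let ?PJ = "PsiJ h w lb1 lc1 lAB \<mu> \<alpha> \<alpha>R"
  let ?T = "Tn h w lb1 lc1 lAB \<mu> \<alpha> \<alpha>R"
  define Q where "Q n j y1 y2 \<longleftrightarrow> 0 \<le> y1 \<and> 0 \<le> y2 \<and> (j \<noteq> Rc1 \<longrightarrow> y2 = 0) \<and>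
    (\<forall>\<rho> x1 x2. 0 \<le> \<rho> \<longrightarrow> 0 \<le> x1 \<longrightarrow> 0 \<le> x2 \<longrightarrow> ?PJ n j \<rho> x1 x2 \<le> \<rho> * ?PJ n j 1 y1 y2)" for n j y1 y2
  have exQ: "\<exists>p. Q n j (fst p) (snd p)" for n j
    by (rule ex_pair) (unfold Q_def, rule PsiJ_max[OF h_nonneg w_nonneg lb1_nonneg lc1_nonneg lAB_nonneg mu_nonneg alpha_pos alphaR_pos
        b2_nonneg xi_nonneg])
  define Y1 where "Y1 n j = fst (SOME p. Q n j (fst p) (snd p))" for n j
  define Y2 where "Y2 n j = snd (SOME p. Q n j (fst p) (snd p))" for n j
  have QY: "Q n j (Y1 n j) (Y2 n j)" for n j
    unfolding Y1_def Y2_def by (rule someI_ex[OF exQ])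
  have Y: "\<And>n j. 0 \<le> Y1 n j" "\<And>n j. 0 \<le> Y2 n j" "\<And>n j. j \<noteq> Rc1 \<Longrightarrow> Y2 n j = 0"
    using QY unfolding Q_def by auto
  have Ymax: "\<And>n j \<rho> x1 x2. 0 \<le> \<rho> \<Longrightarrow> 0 \<le> x1 \<Longrightarrow> 0 \<le> x2 \<Longrightarrow> ?PJ n j \<rho> x1 x2 \<le> \<rho> * ?PJ n j 1 (Y1 n j) (Y2 n j)"
    using QY unfolding Q_def by blast
  define V where "V n j = ?PJ n j 1 (Y1 n j) (Y2 n j)" for n j
  have V0: "0 \<le> V n j" for n j using Ymax[of 1 0 0 n j] unfolding V_def by simp
  have "\<forall>n. \<exists>j\<in>J. \<forall>j'\<in>J. V n j' \<le> V n j"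
  proof
    fix n
    have "Max (V n ` J) \<in> V n ` J" using finJ by (intro Max_in) (auto simp: J_def)
    then obtain j where "j \<in> J" "V n j = Max (V n ` J)" by auto
    then show "\<exists>j\<in>J. \<forall>j'\<in>J. V n j' \<le> V n j" using finJ
      by (intro bexI[of _ j] ballI) (simp_all add: Max_ge)
  qed
  then obtain js where js: "\<And>n. js n \<in> J" and jsmax: "\<And>n j'. j' \<in> J \<Longrightarrow> V n j' \<le> V n (js n)"
    by metis
  define \<rho>s where "\<rho>s n i = (if i = js n then 1 else 0::real)" for n i
  define ss where "ss n p = (if p = x1i (js n) then Y1 n (js n)
      else if js n = Rc1 \<and> p = ScUR B then Y2 n Rc1 else 0)" for n p
  have rs_sum: "rho_sum (\<rho>s n) = 1" for n
    using js[of n] unfolding J_def by (elim insertE emptyE) (simp_all add: rho_sum_def \<rho>s_def)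
  have feas: "feasible N \<rho>s ss"
    unfolding feasible_def using rs_sum Y by (auto simp: \<rho>s_def ss_def)
  have Tval: "?T n (\<rho>s n) (ss n) = V n (js n)" for n
  proof -
    have "?T n (\<rho>s n) (ss n) = ?PJ n (js n) (\<rho>s n (js n)) (ss n (x1i (js n))) (x2v (js n) (ss n))
        + (\<Sum>j\<in>J - {js n}. ?PJ n j (\<rho>s n j) (ss n (x1i j)) (x2v j (ss n)))"
      unfolding Tn_def by (rule sum.remove[OF finJ js])
    also have "(\<Sum>j\<in>J - {js n}. ?PJ n j (\<rho>s n j) (ss n (x1i j)) (x2v j (ss n))) = 0"
    proof (intro sum.neutral ballI)
      fix j assume j: "j \<in> J - {js n}"
      then have "\<rho>s n j = 0" "ss n (x1i j) = 0" "x2v j (ss n) = 0"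
        using x1i_inj[of j "js n"] x1i_ne[of j] x1i_ne[of "js n"]
        by (auto simp: \<rho>s_def ss_def x2v_def)
      then show "?PJ n j (\<rho>s n j) (ss n (x1i j)) (x2v j (ss n)) = 0" by simp
    qed
    also have "x2v (js n) (ss n) = Y2 n (js n)"
      using Y(3)[of "js n" n] by (auto simp: x2v_def ss_def)
    also have "\<rho>s n (js n) = 1" by (simp add: \<rho>s_def)
    also have "ss n (x1i (js n)) = Y1 n (js n)" by (simp add: ss_def)
    finally show ?thesis by (simp only: V_def add_0_right)
  qed
  have Tbound: "?T n (\<rho> n) (s n) \<le> V n (js n)" if f: "feasible N \<rho> s" and n: "n \<in> {1..N}" for \<rho> s n
  proof -
    have fr: "\<And>i. 0 \<le> \<rho> n i" "rho_sum (\<rho> n) \<le> 1" "\<And>p. 0 \<le> s n p"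
      using f n unfolding feasible_def by auto
    have "?T n (\<rho> n) (s n) \<le> (\<Sum>j\<in>J. \<rho> n j * V n j)"
      unfolding Tn_def V_def using fr by (intro sum_mono Ymax) (auto simp: x2v_def)
    also have "\<dots> \<le> (\<Sum>j\<in>J. \<rho> n j * V n (js n))"
      using fr jsmax by (intro sum_mono mult_left_mono) auto
    also have "\<dots> = (\<Sum>j\<in>J. \<rho> n j) * V n (js n)" by (simp add: sum_distrib_right)
    also have "(\<Sum>j\<in>J. \<rho> n j) = rho_sum (\<rho> n)" by (simp add: J_def rho_sum_def algebra_simps)
    also have "rho_sum (\<rho> n) * V n (js n) \<le> 1 * V n (js n)"
      using fr V0 by (intro mult_right_mono) auto
    finally show ?thesis by simp
  qed
  show ?thesis
  proof (intro exI conjI allI impI)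
    show "feasible N \<rho>s ss" by (rule feas)
    show "\<forall>n\<in>{1..N}. \<forall>i. \<rho>s n i \<in> {0, 1}" by (simp add: \<rho>s_def)
    fix \<rho> s assume f: "feasible N \<rho> s"
    have "(\<Sum>n=1..N. ?T n (\<rho> n) (s n)) \<le> (\<Sum>n=1..N. ?T n (\<rho>s n) (ss n))"
      using Tbound[OF f] Tval by (intro sum_mono) auto
    then show "dual_obj N h w r P PR lb1 lc1 lAB \<mu> \<alpha> \<alpha>R \<rho> s
                 \<le> dual_obj N h w r P PR lb1 lc1 lAB \<mu> \<alpha> \<alpha>R \<rho>s ss"
      unfolding decomp by simp
  qed
qed

end
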